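(* For every $n\ge2$, the problem FGP of gathering all robots (including a faulty one) at a single point in the presence of at most one crash fault is unsolvable under the SSYNC scheduler by any algorithm (of any size $\le n$); i.e., its MAS is $\infty$.
   Context: Model. A swarm consists of $n\ge1$ robots $r_1,\dots,r_n$, modeled as points in $\mathbb R^2$. Each robot $r_i$ has a local right-handed $x$-$y$ coordinate system $Z_i$ whose origin is always the robot's current position, with arbitrary (adversarially chosen, fixed) unit length and axis orientation; robots do not share coordinate systems. The configuration at time $t$ is the multiset $P_t$ of the $n$ robot positions (robots can detect multiplicities). A target function $\phi$ maps each finite multiset $P$ of points of $\mathbb R^2$ with $(0,0)\in P$ to a point $\phi(P)\in\mathbb R^2$. Time is discrete, $t=0,1,2,\dots$. Under the semi-synchronous (SSYNC) scheduler, at each time $t$ an adversary chooses a set of robots to activate; each activated robot $r_i$ observes $P_t$ expressed in $Z_i$, evaluates its target function on this multiset, and moves to the resulting point (interpreted in $Z_i$), arriving before time $t+1$; non-activated robots do not move. Schedules are fair: every robot is activated infinitely often. An algorithm of size $m$ is a set $\Phi$ of $m$ distinct target functions ($m\le n$); an assignment is a surjection $\mathcal A$ from the robots onto $\Phi$, robot $r_i$ using $\mathcal A(r_i)$. $\Phi$ solves a problem if for every assignment, every choice of local coordinate systems, every initial configuration and every fair SSYNC schedule, the resulting execution solves the problem. The MAS of a problem is the least $m$ such that some algorithm of size $m$ solves it, and $\infty$ if no algorithm of any size $m\le n$ solves it. Crash faults. The adversary may choose up to $f$ robots to be faulty and, for each, a time from which it crashes: from then on it never moves again (even when activated); before that it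 behaves correctly. "Solves under at most $f$ crashes" quantifies additionally over all such crash patterns. Problem. FGP: starting from any initial configuration, with at most one crashed robot, reach a configuration in which all $n$ robots (faulty ones included) occupy a single point. *)

theory Defs
  imports Complex_Main "HOL-Library.Multiset" "HOL-Library.Extended_Nat"
begin

text \<open>The plane R^2 is modelled as the complex numbers. Robots are 0,...,n-1.
  A local right-handed coordinate system with arbitrary unit length and axis
  orientation, whose origin is the robot's current position, is given by a fixed
  nonzero complex number c: local coordinates z correspond to the global point
  (robot position) + c * z.\<close>

type_synonym target = "complex multiset \<Rightarrow> complex"

definition config :: "nat \<Rightarrow> (nat \<Rightarrow> complex) \<Rightarrow> complex multiset" where
  "config n p = image_mset p (mset_set {..<n})"

definition local_view :: "nat \<Rightarrow> (nat \<Rightarrow> complex) \<Rightarrow> complex \<Rightarrow> nat \<Rightarrow> complex multiset" where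
  "local_view n p c i = image_mset (\<lambda>q. (q - p i) / c) (config n p)"

definition fair_schedule :: "nat \<Rightarrow> (nat \<Rightarrow> nat set) \<Rightarrow> bool" where
  "fair_schedule n act \<longleftrightarrow> (\<forall>i<n. \<forall>T. \<exists>t\<ge>T. i \<in> act t)"

definition ssync_crash_exec ::
  "nat \<Rightarrow> (nat \<Rightarrow> target) \<Rightarrow> (nat \<Rightarrow> complex) \<Rightarrow> (nat \<Rightarrow> nat set) \<Rightarrow> nat option \<Rightarrow> nat
   \<Rightarrow> (nat \<Rightarrow> nat \<Rightarrow> complex) \<Rightarrow> bool" where
  "ssync_crash_exec n A frame act faulty ct x \<longleftrightarrow>
     (\<forall>t i. i < n \<longrightarrow>
        x (Suc t) i =
          (if i \<in> act t \<and> \<not> (faulty = Some i \<and> ct \<le> t)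
           then x t i + frame i * A i (local_view n (x t) (frame i) i)
           else x t i))"

definition solves_FGP :: "nat \<Rightarrow> target set \<Rightarrow> bool" where
  "solves_FGP n Phi \<longleftrightarrow>
     (\<forall>A. A ` {..<n} = Phi \<longrightarrow>
      (\<forall>frame. (\<forall>i<n. frame i \<noteq> 0) \<longrightarrow>
       (\<forall>act. fair_schedule n act \<longrightarrow>
        (\<forall>faulty ct. (\<forall>i. faulty = Some i \<longrightarrow> i < n) \<longrightarrow>
         (\<forall>x. ssync_crash_exec n A frame act faulty ct x \<longrightarrow>
              (\<exists>t. \<forall>i<n. \<forall>j<n. x t i = x t j))))))"

definition FGP_MAS :: "nat \<Rightarrow> enat" where
  "FGP_MAS n =
     (if \<exists>m. 1 \<le> m \<and> m \<le> n \<and> (\<exists>Phi. finite Phi \<and> card Phi = m \<and> solves_FGP n Phi)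
      then enat (LEAST m. 1 \<le> m \<and> m \<le> n \<and> (\<exists>Phi. finite Phi \<and> card Phi = m \<and> solves_FGP n Phi))
      else \<infinity>)"

end

theory Submission
  imports Defs
begin

definition gath :: "nat \<Rightarrow> (nat \<Rightarrow> complex) \<Rightarrow> bool" where
  "gath n y = (\<forall>i<n. \<forall>j<n. y i = y j)"

context
  fixes n :: nat and F :: "nat \<Rightarrow> (nat \<Rightarrow> complex) \<Rightarrow> complex" and y0 :: "nat \<Rightarrow> complex"
  assumes npos: "0 < n"
begin

definition nxt :: "nat \<Rightarrow> (nat\<Rightarrow>complex) \<times> (nat\<times>nat) option \<Rightarrow> (nat\<Rightarrow>complex) \<times> (nat\<times>nat) option" where
"nxt t st = (case st of (y, Some rc) \<Rightarrow> (y, Some rc)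
   | (y, None) \<Rightarrow> (if \<not> gath n (y(t mod n := F (t mod n) y)) then (y(t mod n := F (t mod n) y), None)
      else if (\<exists>j<n. j \<noteq> t mod n \<and> F j y \<noteq> y j)
      then (y(t mod n := F (t mod n) y, (SOME j. j<n \<and> j \<noteq> t mod n \<and> F j y \<noteq> y j)
               := F (SOME j. j<n \<and> j \<noteq> t mod n \<and> F j y \<noteq> y j) y), None)
      else (y, Some (t mod n, t))))"

primrec run :: "nat \<Rightarrow> (nat\<Rightarrow>complex) \<times> (nat\<times>nat) option" where
  "run 0 = (y0, None)"
| "run (Suc t) = nxt t (run t)"

definition actf :: "nat \<Rightarrow> nat set" where
"actf t = (case run t of (y, Some rc) \<Rightarrow> UNIV
   | (y, None) \<Rightarrow> (if \<not> gath n (y(t mod n := F (t mod n) y)) then {t mod n}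
      else if (\<exists>j<n. j \<noteq> t mod n \<and> F j y \<noteq> y j)
      then {t mod n, SOME j. j<n \<and> j \<noteq> t mod n \<and> F j y \<noteq> y j}
      else UNIV))"

lemma act_mod: "t mod n \<in> actf t"
  by (auto simp: actf_def split: prod.splits option.splits)

lemma K: "snd (run t) = Some rc \<Longrightarrow> t \<le> t' \<Longrightarrow> run t' = run t"
proof (induction t')
  case 0 then show ?case by simp
next
  case (Suc m) then show ?case
    by (cases "t = Suc m") (auto simp: nxt_def split: prod.splits)
qed

lemma U: "snd (run t) = Some rc \<Longrightarrow> snd (run t') = Some rc' \<Longrightarrow> rc = rc'"
  using K[of t rc "max t t'"] K[of t' rc' "max t t'"] by simp

lemma T: "snd (run t) = Some (r,c) \<Longrightarrow> c < t \<and> r < n \<and> snd (run (Suc c)) = Some (r,c) \<and> (\<forall>j<n. j \<noteq> r \<longrightarrow> F j (fst (run t)) = fst (run t) j)"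
proof (induction t arbitrary: r c)
  case 0 then show ?case by simp
next
  case (Suc t)
  obtain y s where ys: "run t = (y, s)" by fastforce
  show ?case
  proof (cases s)
    case (Some rc)
    then show ?thesis using Suc ys by (cases rc) (auto simp: nxt_def)
  next
    case None
    then show ?thesis using Suc ys
      by (auto simp: nxt_def npos split: if_splits)
  qed
qed

lemma N: "snd (run t) = None \<Longrightarrow> snd (run t') = Some (r,c) \<Longrightarrow> t \<le> c"
proof (rule ccontr)
  assume a: "snd (run t) = None" "snd (run t') = Some (r,c)" "\<not> t \<le> c"
  have "snd (run (Suc c)) = Some (r,c)" using T[OF a(2)] by simp
  then show False using K[of "Suc c" "(r,c)" t] a by simp
qed

lemma G: "\<not> gath n y0 \<Longrightarrow> \<not> gath n (fst (run t))"
proof (induction t)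
  case 0 then show ?case by simp
next
  case (Suc t)
  obtain y s where ys: "run t = (y, s)" by fastforce
  have ng: "\<not> gath n y" using Suc ys by simp
  show ?case
  proof (cases s)
    case (Some rc) then show ?thesis using ng ys by (auto simp: nxt_def)
  next
    case None
    let ?r = "t mod n"
    let ?j = "SOME j. j<n \<and> j \<noteq> ?r \<and> F j y \<noteq> y j"
    show ?thesis
    proof (cases "gath n (y(?r := F ?r y)) \<and> (\<exists>j<n. j \<noteq> ?r \<and> F j y \<noteq> y j)")
      case True
      then have g: "gath n (y(?r := F ?r y))" and ex: "\<exists>j<n. j \<noteq> ?r \<and> F j y \<noteq> y j" by auto
      from someI_ex[OF ex] have j: "?j < n" "?j \<noteq> ?r" "F ?j y \<noteq> y ?j" by auto
      have r: "?r < n" using npos by simp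
      have "(y(?r := F ?r y)) ?j = (y(?r := F ?r y)) ?r" using g j r unfolding gath_def by blast
      then have yj: "y ?j = F ?r y" using j by simp
      have ngj: "\<not> gath n (y(?r := F ?r y, ?j := F ?j y))"
      proof
        assume "gath n (y(?r := F ?r y, ?j := F ?j y))"
        then have "(y(?r := F ?r y, ?j := F ?j y)) ?j = (y(?r := F ?r y, ?j := F ?j y)) ?r"
          using j r unfolding gath_def by blast
        then show False using j yj by simp
      qed
      have st: "run (Suc t) = (y(?r := F ?r y, ?j := F ?j y), None)"
        using True None ys by (simp add: nxt_def)
      show ?thesis using ngj unfolding st fst_conv .
    next
      case False
      show ?thesis
      proof (cases "gath n (y(?r := F ?r y))")
        case True
        then have "run (Suc t) = (y, Some (?r, t))" using False None ys by (simp add: nxt_def)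
        then show ?thesis using ng by simp
      next
        case f2: False
        have st: "run (Suc t) = (y(?r := F ?r y), None)" using f2 None ys by (simp add: nxt_def)
        show ?thesis using f2 unfolding st fst_conv .
      qed
    qed
  qed
qed

definition "tc = (SOME t. snd (run t) \<noteq> None)"
definition "fa = (if \<exists>t. snd (run t) \<noteq> None then map_option fst (snd (run tc)) else None)"
definition "ctm = (if \<exists>t. snd (run t) \<noteq> None then snd (the (snd (run tc))) else 0)"

lemma fa_ct: "snd (run t) = Some (r,c) \<Longrightarrow> fa = Some r \<and> ctm = c"
proof -
  assume a: "snd (run t) = Some (r,c)"
  then have ex: "\<exists>t. snd (run t) \<noteq> None" by auto
  then have "snd (run tc) \<noteq> None" unfolding tc_def by (rule someI_ex)
  then obtain rc where "snd (run tc) = Some rc" by auto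
  with U[OF a this] have "snd (run tc) = Some (r,c)" by simp
  then show ?thesis using ex unfolding fa_def ctm_def by simp
qed

lemma fa_lt: "fa = Some i \<Longrightarrow> i < n"
proof -
  assume a: "fa = Some i"
  then have ex: "\<exists>t. snd (run t) \<noteq> None" unfolding fa_def by (auto split: if_splits)
  then have "snd (run tc) \<noteq> None" unfolding tc_def by (rule someI_ex)
  then obtain r c where rc: "snd (run tc) = Some (r,c)" by fastforce
  from T[OF rc] fa_ct[OF rc] a show ?thesis by simp
qed

lemma nc: "snd (run (Suc t)) = None \<Longrightarrow> \<not> (fa = Some i \<and> ctm \<le> t)"
proof
  assume s: "snd (run (Suc t)) = None" and a: "fa = Some i \<and> ctm \<le> t"
  then have ex: "\<exists>t. snd (run t) \<noteq> None" unfolding fa_def by (auto split: if_splits)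
  then have "snd (run tc) \<noteq> None" unfolding tc_def by (rule someI_ex)
  then obtain r c where rc: "snd (run tc) = Some (r,c)" by fastforce
  from N[OF s rc] fa_ct[OF rc] a show False by simp
qed

lemma exec: "i < n \<Longrightarrow> fst (run (Suc t)) i =
   (if i \<in> actf t \<and> \<not> (fa = Some i \<and> ctm \<le> t) then fst (run t) i + (F i (fst (run t)) - fst (run t) i) else fst (run t) i)"
proof -
  assume i: "i < n"
  obtain y s where ys: "run t = (y, s)" by fastforce
  show ?thesis
  proof (cases s)
    case (Some rc)
    obtain r c where rc: "rc = (r,c)" by fastforce
    have s: "snd (run t) = Some (r,c)" using ys Some rc by simp
    from T[OF s] fa_ct[OF s] have "c < t" "\<forall>j<n. j \<noteq> r \<longrightarrow> F j y = y j" "fa = Some r" "ctm = c"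
      using ys by auto
    moreover have "run (Suc t) = (y, Some (r,c))" using ys Some rc by (simp add: nxt_def)
    moreover have "actf t = UNIV" using ys Some rc by (simp add: actf_def)
    ultimately show ?thesis using ys i by (cases "i = r") auto
  next
    case None
    let ?r = "t mod n"
    show ?thesis
    proof (cases "gath n (y(?r := F ?r y)) \<and> \<not>(\<exists>j<n. j \<noteq> ?r \<and> F j y \<noteq> y j)")
      case True
      then have s: "snd (run (Suc t)) = Some (?r, t)" using None ys by (simp add: nxt_def)
      have st: "run (Suc t) = (y, Some (?r,t))" using True None ys by (simp add: nxt_def)
      have ac: "actf t = UNIV" using True None ys by (auto simp: actf_def)
      have fc: "fa = Some ?r" "ctm = t" using fa_ct[OF s] by auto
      have "\<forall>j<n. j \<noteq> ?r \<longrightarrow> F j y = y j" using True by blast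
      then show ?thesis using st ac fc ys i by (cases "i = ?r") auto
    next
      case False
      show ?thesis
      proof (cases "gath n (y(?r := F ?r y))")
        case False
        then have st: "run (Suc t) = (y(?r := F ?r y), None)" and ac: "actf t = {?r}"
          using None ys by (simp_all add: nxt_def actf_def)
        have nc: "\<not> (fa = Some i \<and> ctm \<le> t)" using nc[of t i] st by simp
        show ?thesis using ys nc st ac by (cases "i = ?r") simp_all
      next
        case True
        define j where "j = (SOME j. j<n \<and> j \<noteq> ?r \<and> F j y \<noteq> y j)"
        have ex: "\<exists>j<n. j \<noteq> ?r \<and> F j y \<noteq> y j" using True False by blast
        from someI_ex[OF ex] have j: "j \<noteq> ?r" unfolding j_def by auto
        have st: "run (Suc t) = (y(?r := F ?r y, j := F j y), None)" and ac: "actf t = {?r, j}"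
          using None ys True ex unfolding j_def by (simp_all add: nxt_def actf_def)
        have nc: "\<not> (fa = Some i \<and> ctm \<le> t)" using nc[of t i] st by simp
        show ?thesis using ys nc st ac j by (cases "i = ?r"; cases "i = j") simp_all
      qed
    qed
  qed
qed

end

lemma fair: "0 < n \<Longrightarrow> fair_schedule n (actf n F y0)"
  unfolding fair_schedule_def
proof (intro allI impI)
  fix i T assume "0 < n" "i < n"
  then have "(T*n + i) mod n = i" by auto
  have "T \<le> T*n" using \<open>0<n\<close> by simp
  then have "T*n + i \<ge> T" by linarith
  moreover have "(T*n+i) mod n \<in> actf n F y0 (T*n+i)" by (rule act_mod[OF \<open>0<n\<close>])
  ultimately show "\<exists>t\<ge>T. i \<in> actf n F y0 t" using \<open>(T*n + i) mod n = i\<close> by metis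
qed


theorem theoremT4050:
  fixes n :: nat
  assumes "n \<ge> 2"
  shows "(\<forall>Phi. finite Phi \<and> 1 \<le> card Phi \<and> card Phi \<le> n \<longrightarrow> \<not> solves_FGP n Phi)
         \<and> FGP_MAS n = \<infinity>"
proof -
  have npos: "0 < n" using assms by simp
  have main: "\<not> solves_FGP n Phi" if fin: "finite Phi" and c1: "1 \<le> card Phi" and c2: "card Phi \<le> n" for Phi
  proof
    assume sol: "solves_FGP n Phi"
    obtain h where h: "bij_betw h {0..<card Phi} Phi" using ex_bij_betw_nat_finite[OF fin] by blast
    define A :: "nat \<Rightarrow> target" where "A i = (if i < card Phi then h i else h 0)" for i
    have AP: "A ` {..<n} = Phi"
    proof
      show "A ` {..<n} \<subseteq> Phi" using h c1 unfolding A_def bij_betw_def by auto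
      show "Phi \<subseteq> A ` {..<n}"
      proof
        fix p assume "p \<in> Phi"
        then have "p \<in> h ` {0..<card Phi}" using h unfolding bij_betw_def by simp
        then obtain k where k: "k < card Phi" "p = h k" by auto
        then have "p = A k" "k < n" using c2 unfolding A_def by auto
        then show "p \<in> A ` {..<n}" by auto
      qed
    qed
    define frame :: "nat \<Rightarrow> complex" where "frame i = 1" for i
    define F where "F i y = y i + frame i * A i (local_view n y (frame i) i)" for i y
    define y0 :: "nat \<Rightarrow> complex" where "y0 i = of_nat i" for i
    have ng0: "\<not> gath n y0"
    proof
      assume "gath n y0"
      then have "y0 0 = y0 1" using assms unfolding gath_def by auto
      then show False unfolding y0_def by simp
    qed
    define x where "x t = fst (run n F y0 t)" for t
    have ex: "ssync_crash_exec n A frame (actf n F y0) (fa n F y0) (ctm n F y0) x"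
      unfolding ssync_crash_exec_def
    proof (intro allI impI)
      fix t i assume "i < n"
      have e: "x (Suc t) i = (if i \<in> actf n F y0 t \<and> \<not> (fa n F y0 = Some i \<and> ctm n F y0 \<le> t)
           then x t i + (F i (x t) - x t i) else x t i)"
        using exec[OF npos \<open>i < n\<close>, of F y0 t] unfolding x_def .
      have Fd: "F i (x t) - x t i = frame i * A i (local_view n (x t) (frame i) i)" unfolding F_def by simp
      show "x (Suc t) i =
          (if i \<in> actf n F y0 t \<and> \<not> (fa n F y0 = Some i \<and> ctm n F y0 \<le> t)
           then x t i + frame i * A i (local_view n (x t) (frame i) i) else x t i)"
        using e unfolding Fd .
    qed
    have fr: "\<forall>i<n. frame i \<noteq> 0" by (simp add: frame_def)
    have fs: "fair_schedule n (actf n F y0)" using fair[OF npos] .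
    have fl: "\<forall>i. fa n F y0 = Some i \<longrightarrow> i < n" using fa_lt[OF npos] by blast
    have "\<exists>t. \<forall>i<n. \<forall>j<n. x t i = x t j"
      using sol AP ex fr fs fl unfolding solves_FGP_def by blast
    then show False using G[OF npos ng0] unfolding x_def gath_def by blast
  qed
  show ?thesis
  proof
    show "\<forall>Phi. finite Phi \<and> 1 \<le> card Phi \<and> card Phi \<le> n \<longrightarrow> \<not> solves_FGP n Phi"
      using main by blast
    show "FGP_MAS n = \<infinity>" unfolding FGP_MAS_def using main by auto
  qed
qed

end
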